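(* Let $G$ be a graph with girth at least $15$ and minimum degree $\delta(G)\ge 2$. Then $G\notin\mathcal U$.
   Context: All graphs are finite and simple. A set $P\subseteq V(G)$ is an open packing if no two distinct vertices of $P$ have a common neighbor; it is maximal if maximal under inclusion among open packings. $\rho^o(G)$ is the maximum size of an open packing and $\rho^o_L(G)$ the minimum size of a maximal open packing; $\mathcal U$ is the class of graphs with $\rho^o_L(G)=\rho^o(G)$. The girth is the length of a shortest cycle ($\infty$ if acyclic). *)

theory Defs
  imports Main
begin

definition finite_simple_graph :: "'a set \<Rightarrow> ('a \<Rightarrow> 'a \<Rightarrow> bool) \<Rightarrow> bool" where
  "finite_simple_graph V E \<longleftrightarrow> finite V \<and> V \<noteq> {} \<and>
     (\<forall>u v. E u v \<longrightarrow> u \<in> V \<and> v \<in> V) \<and>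
     (\<forall>u v. E u v \<longrightarrow> E v u) \<and> (\<forall>v. \<not> E v v)"

definition nbhd :: "'a set \<Rightarrow> ('a \<Rightarrow> 'a \<Rightarrow> bool) \<Rightarrow> 'a \<Rightarrow> 'a set" where
  "nbhd V E v = {u \<in> V. E v u}"

definition min_degree :: "'a set \<Rightarrow> ('a \<Rightarrow> 'a \<Rightarrow> bool) \<Rightarrow> nat" where
  "min_degree V E = Min ((\<lambda>v. card (nbhd V E v)) ` V)"

definition is_cycle :: "'a set \<Rightarrow> ('a \<Rightarrow> 'a \<Rightarrow> bool) \<Rightarrow> 'a list \<Rightarrow> bool" where
  "is_cycle V E cs \<longleftrightarrow> length cs \<ge> 3 \<and> distinct cs \<and> set cs \<subseteq> V \<and>
     (\<forall>i < length cs. E (cs ! i) (cs ! ((i + 1) mod length cs)))"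

text \<open>Girth at least g (girth is infinite for acyclic graphs): no cycle of length < g.\<close>
definition girth_at_least :: "'a set \<Rightarrow> ('a \<Rightarrow> 'a \<Rightarrow> bool) \<Rightarrow> nat \<Rightarrow> bool" where
  "girth_at_least V E g \<longleftrightarrow> (\<forall>cs. is_cycle V E cs \<longrightarrow> length cs \<ge> g)"

definition open_packing :: "'a set \<Rightarrow> ('a \<Rightarrow> 'a \<Rightarrow> bool) \<Rightarrow> 'a set \<Rightarrow> bool" where
  "open_packing V E P \<longleftrightarrow> P \<subseteq> V \<and>
     (\<forall>u\<in>P. \<forall>v\<in>P. u \<noteq> v \<longrightarrow> \<not> (\<exists>w\<in>V. E u w \<and> E v w))"

definition maximal_open_packing :: "'a set \<Rightarrow> ('a \<Rightarrow> 'a \<Rightarrow> bool) \<Rightarrow> 'a set \<Rightarrow> bool" where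
  "maximal_open_packing V E P \<longleftrightarrow> open_packing V E P \<and>
     (\<forall>Q. open_packing V E Q \<and> P \<subseteq> Q \<longrightarrow> Q = P)"

definition open_packing_number :: "'a set \<Rightarrow> ('a \<Rightarrow> 'a \<Rightarrow> bool) \<Rightarrow> nat" where
  "open_packing_number V E = Max (card ` {P. open_packing V E P})"

definition lower_open_packing_number :: "'a set \<Rightarrow> ('a \<Rightarrow> 'a \<Rightarrow> bool) \<Rightarrow> nat" where
  "lower_open_packing_number V E = Min (card ` {P. maximal_open_packing V E P})"

definition in_class_U :: "'a set \<Rightarrow> ('a \<Rightarrow> 'a \<Rightarrow> bool) \<Rightarrow> bool" where
  "in_class_U V E \<longleftrightarrow> lower_open_packing_number V E = open_packing_number V E"

end

theory Submission
  imports Defs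
begin

fun nbw :: "('a \<Rightarrow> 'a \<Rightarrow> bool) \<Rightarrow> 'a list \<Rightarrow> bool" where
  "nbw E (x # y # z # r) = (E x y \<and> x \<noteq> z \<and> nbw E (y # z # r))"
| "nbw E [x, y] = E x y"
| "nbw E _ = True"

lemma nbw_Cons:
  "nbw E (x # xs) \<longleftrightarrow> nbw E xs \<and> (case xs of [] \<Rightarrow> True | y # ys \<Rightarrow> E x y \<and>
     (case ys of [] \<Rightarrow> True | z # _ \<Rightarrow> x \<noteq> z))"
  by (cases xs; cases "tl xs") (auto split: list.splits)

lemma nbw_succ: "nbw E xs \<Longrightarrow> successively E xs"
  by (induction E xs rule: nbw.induct) auto

lemma nbw_snoc: "nbw E (xs @ [a,b]) \<Longrightarrow> E b c \<Longrightarrow> a \<noteq> c \<Longrightarrow> nbw E (xs @ [a,b,c])"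
proof (induction xs)
  case Nil then show ?case by simp
next
  case (Cons x xs)
  then show ?case
    by (cases xs rule: list.exhaust; cases "tl xs" rule: list.exhaust) (auto simp: nbw_Cons split: list.splits)
qed

lemma nbw_butlast: "nbw E (xs @ [a]) \<Longrightarrow> nbw E xs"
proof (induction xs)
  case Nil then show ?case by simp
next
  case (Cons x xs)
  then show ?case
    by (cases xs rule: list.exhaust; cases "tl xs" rule: list.exhaust) (auto simp: nbw_Cons split: list.splits)
qed

lemma nbw_set:
  assumes "finite_simple_graph V E" "nbw E xs" "length xs \<ge> 2"
  shows "set xs \<subseteq> V"
proof
  fix v assume v: "v \<in> set xs"
  then obtain i where i: "i < length xs" "xs ! i = v" by (auto simp: in_set_conv_nth)
  have s: "successively E xs" using assms(2) by (rule nbw_succ)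
  have EV: "\<And>u w. E u w \<Longrightarrow> u \<in> V \<and> w \<in> V" using assms(1) by (auto simp: finite_simple_graph_def)
  show "v \<in> V"
  proof (cases "Suc i < length xs")
    case True
    then show ?thesis using successively_nth[OF s True] EV i by auto
  next
    case False
    then have "i = Suc (i - 1)" "Suc (i - 1) < length xs" using i assms(3) by auto
    then show ?thesis using successively_nth[OF s, of "i - 1"] EV i by metis
  qed
qed

lemma cycle_adj:
  assumes "successively E (cs @ [hd cs])" "cs \<noteq> []"
  shows "\<forall>i < length cs. E (cs ! i) (cs ! ((i + 1) mod length cs))"
proof (intro allI impI)
  fix i assume i: "i < length cs"
  have "E ((cs @ [hd cs]) ! i) ((cs @ [hd cs]) ! Suc i)"
    using successively_nth[OF assms(1)] i by simp
  moreover have "(cs @ [hd cs]) ! i = cs ! i" using i by (simp add: nth_append)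
  moreover have "(cs @ [hd cs]) ! Suc i = cs ! ((i + 1) mod length cs)"
  proof (cases "Suc i < length cs")
    case True then show ?thesis by (simp add: nth_append)
  next
    case False
    then have "Suc i = length cs" using i by simp
    then show ?thesis using assms(2) by (simp add: nth_append hd_conv_nth)
  qed
  ultimately show "E (cs ! i) (cs ! ((i + 1) mod length cs))" by simp
qed

lemma nbw_distinct:
  assumes G: "finite_simple_graph V E" and gi: "girth_at_least V E g"
  shows "nbw E xs \<Longrightarrow> length xs \<le> g \<Longrightarrow> distinct xs"
proof (induction xs)
  case Nil then show ?case by simp
next
  case (Cons x xs)
  have nx: "nbw E xs" using Cons.prems(1) by (simp add: nbw_Cons)
  have dxs: "distinct xs" using Cons.IH nx Cons.prems(2) by simp
  have irr: "\<And>v. \<not> E v v" using G by (simp add: finite_simple_graph_def)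
  show ?case
  proof (rule ccontr)
    assume "\<not> distinct (x # xs)"
    then have "x \<in> set xs" using dxs by simp
    then obtain r1 r2 where r: "xs = r1 @ x # r2" "x \<notin> set r1" by (metis split_list_first)
    define cs where "cs = x # r1"
    have r1ne: "r1 \<noteq> []"
    proof
      assume "r1 = []"
      then have "nbw E (x # x # r2)" using Cons.prems(1) r by simp
      then show False using irr by (simp add: nbw_Cons)
    qed
    have r1n1: "length r1 \<noteq> 1"
    proof
      assume "length r1 = 1"
      then obtain y where "r1 = [y]" by (cases r1) auto
      then have "nbw E (x # y # x # r2)" using Cons.prems(1) r by simp
      then show False by simp
    qed
    have succ: "successively E (x # r1 @ x # r2)" using nbw_succ[OF Cons.prems(1)] r by simp
    then have "successively E (cs @ [hd cs])"
      unfolding cs_def using successively_append_iff[of E "x # r1 @ [x]" r2] by simp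
    then have adj: "\<forall>i < length cs. E (cs ! i) (cs ! ((i + 1) mod length cs))"
      using cycle_adj cs_def by blast
    have "set (x # xs) \<subseteq> V"
      using nbw_set[OF G Cons.prems(1)] r r1ne by (cases r1) auto
    then have sV: "set cs \<subseteq> V" using r cs_def by auto
    have dcs: "distinct cs" using dxs r cs_def by simp
    have "length r1 \<ge> 2" using r1ne r1n1 by (cases r1) (auto simp: Suc_le_eq)
    then have l3: "length cs \<ge> 3" using cs_def by simp
    have "is_cycle V E cs" using adj sV dcs l3 by (simp add: is_cycle_def)
    then have "length cs \<ge> g" using gi by (simp add: girth_at_least_def)
    moreover have "length cs < length (x # xs)" using r cs_def by simp
    ultimately show False using Cons.prems(2) by simp
  qed
qed

lemma no_common:
  assumes G: "finite_simple_graph V E" and gi: "girth_at_least V E g"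
    and p: "nbw E (u # y # mid @ [y', v])"
    and len: "length mid + 6 \<le> g"
  shows "\<not> (E u x \<and> E v x)"
proof
  assume ux: "E u x \<and> E v x"
  have sym: "\<And>a b. E a b \<Longrightarrow> E b a" using G by (simp add: finite_simple_graph_def)
  have d: "distinct (u # y # mid @ [y', v])" using nbw_distinct[OF G gi p] len by simp
  then have yy: "y \<noteq> y'" by auto
  consider "x = y" | "x = y'" | "x \<noteq> y \<and> x \<noteq> y'" by blast
  then show False
  proof cases
    case 1
    have "nbw E ((y # mid) @ [y', v])" using p by (simp add: nbw_Cons)
    then have "nbw E ((y # mid) @ [y', v, y])" using nbw_snoc ux 1 yy sym by metis
    moreover have "length ((y # mid) @ [y', v, y]) \<le> g" using len by simp
    ultimately have "distinct ((y # mid) @ [y', v, y])" using nbw_distinct[OF G gi] by blast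
    then show False by simp
  next
    case 2
    have "nbw E ((u # y # mid @ [y']))" using p nbw_butlast[of E "u # y # mid @ [y']" v] by simp
    then have "nbw E (y' # u # y # mid @ [y'])" using ux 2 yy sym by (simp add: nbw_Cons)
    moreover have "length (y' # u # y # mid @ [y']) \<le> g" using len by simp
    ultimately have "distinct (y' # u # y # mid @ [y'])" using nbw_distinct[OF G gi] by blast
    then show False by simp
  next
    case 3
    have "nbw E ((u # y # mid) @ [y', v])" using p by simp
    then have "nbw E ((u # y # mid) @ [y', v, x])" using nbw_snoc ux 3 by metis
    then have "nbw E (x # (u # y # mid) @ [y', v, x])" using ux 3 sym by (simp add: nbw_Cons)
    moreover have "length (x # (u # y # mid) @ [y', v, x]) \<le> g" using len by simp
    ultimately have "distinct (x # (u # y # mid) @ [y', v, x])" using nbw_distinct[OF G gi] by blast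
    then show False by simp
  qed
qed

lemma packing_conflict:
  "open_packing V E P \<Longrightarrow> u \<in> P \<Longrightarrow> v \<in> P \<Longrightarrow> u \<noteq> v \<Longrightarrow> w \<in> V \<Longrightarrow> E u w \<Longrightarrow> E v w \<Longrightarrow> False"
  unfolding open_packing_def by blast

theorem lemma2:
  fixes V :: "'a set" and E :: "'a \<Rightarrow> 'a \<Rightarrow> bool"
  assumes "finite_simple_graph V E"
    and "girth_at_least V E 15"
    and "min_degree V E \<ge> 2"
  shows "\<not> in_class_U V E"
proof -
  note G = assms(1) and gi = assms(2)
  have fin: "finite V" and ne: "V \<noteq> {}" and EV: "\<And>u w. E u w \<Longrightarrow> u \<in> V \<and> w \<in> V"
    and sy: "\<And>u w. E u w \<Longrightarrow> E w u" and irr: "\<And>v. \<not> E v v"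
    using G by (auto simp: finite_simple_graph_def)
  have deg: "card (nbhd V E v) \<ge> 2" if "v \<in> V" for v
  proof -
    have "min_degree V E \<le> card (nbhd V E v)"
      unfolding min_degree_def using fin that by (intro Min_le) auto
    then show ?thesis using assms(3) by simp
  qed
  have other: "\<exists>u. E v u \<and> u \<noteq> t" if "v \<in> V" for v t
  proof (rule ccontr)
    assume "\<not> ?thesis"
    then have "nbhd V E v \<subseteq> {t}" by (auto simp: nbhd_def)
    then have "card (nbhd V E v) \<le> card {t}" by (intro card_mono) auto
    then show False using deg[OF that] by simp
  qed
  obtain a where a: "a \<in> V" using ne by blast
  obtain w1 where w1: "E a w1" using other[OF a] by blast
  obtain w2 where w2: "E a w2" "w2 \<noteq> w1" using other[OF a] by blast
  obtain b1 where b1: "E w1 b1" "b1 \<noteq> a" using other[of w1 a] EV w1 by blast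
  obtain b2 where b2: "E w2 b2" "b2 \<noteq> a" using other[of w2 a] EV w2 by blast
  define F where "F w z = (SOME p. E z (fst p) \<and> fst p \<noteq> w \<and> E (fst p) (snd p) \<and> snd p \<noteq> z)" for w z
  have Fp: "E z (fst (F w z)) \<and> fst (F w z) \<noteq> w \<and> E (fst (F w z)) (snd (F w z)) \<and> snd (F w z) \<noteq> z"
    if wz: "E w z" for w z
  proof -
    obtain z' where z': "E z z'" "z' \<noteq> w" using other[of z w] EV wz by blast
    obtain s where s: "E z' s" "s \<noteq> z" using other[of z' z] EV z' by blast
    have "\<exists>p. E z (fst p) \<and> fst p \<noteq> w \<and> E (fst p) (snd p) \<and> snd p \<noteq> z"
      using z' s by (intro exI[of _ "(z', s)"]) simp
    then show ?thesis unfolding F_def by (rule someI_ex)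
  qed
  define zp where "zp b w z \<longleftrightarrow> ((b = b1 \<and> w \<noteq> w1) \<or> (b = b2 \<and> w \<noteq> w2)) \<and> E b w \<and> E w z \<and> z \<noteq> b"
    for b w z
  define T where "T = {s. \<exists>b w z. zp b w z \<and> s = snd (F w z)}"
  define S where "S = insert a T"
  have nc: "\<not> (E u x \<and> E v x)" if "nbw E (u # y # mid @ [y', v])" "length mid \<le> 9" for u y mid y' v x
    using no_common[OF G gi that(1)] that(2) by simp
  have nb12: "nbw E ([b1, w1, a, w2, b2])" using w1 w2 b1 b2 sy by simp
  have b12: "b1 \<noteq> b2"
  proof -
    have "distinct [b1, w1, a, w2, b2]" using nbw_distinct[OF G gi nb12] by simp
    then show ?thesis by simp
  qed
  have b12c: "\<not> (E b1 x \<and> E b2 x)" for x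
    using nc[of b1 w1 "[a]" w2 b2 x] nb12 by simp
  have zpD: "E b w \<and> E w b \<and> E w z \<and> E z w \<and> z \<noteq> b \<and> b \<noteq> z \<and> ((b = b1 \<and> w \<noteq> w1 \<and> w1 \<noteq> w) \<or> (b = b2 \<and> w \<noteq> w2 \<and> w2 \<noteq> w))
     \<and> E z (fst (F w z)) \<and> E (fst (F w z)) z \<and> fst (F w z) \<noteq> w \<and> w \<noteq> fst (F w z)
     \<and> E (fst (F w z)) (snd (F w z)) \<and> E (snd (F w z)) (fst (F w z)) \<and> snd (F w z) \<noteq> z \<and> z \<noteq> snd (F w z)"
    if "zp b w z" for b w z
  proof -
    have h: "E b w" "E w z" "z \<noteq> b" "(b = b1 \<and> w \<noteq> w1) \<or> (b = b2 \<and> w \<noteq> w2)" using that zp_def by auto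
    have "E z (fst (F w z)) \<and> fst (F w z) \<noteq> w \<and> E (fst (F w z)) (snd (F w z)) \<and> snd (F w z) \<noteq> z"
      using Fp[OF h(2)] .
    then show ?thesis using h sy by metis
  qed
  have w1s: "E w1 a" "w1 \<noteq> w2" "E b1 w1" "a \<noteq> b1" using w1 w2 b1 sy by auto
  have w2s: "E w2 a" "E b2 w2" "a \<noteq> b2" using w2 b2 sy by auto
  have aT: "\<not> (E a x \<and> E s x)" if sT: "s \<in> T" for s x
  proof -
    obtain b w z where z: "zp b w z" "s = snd (F w z)" using sT T_def by blast
    note Z = zpD[OF z(1)]
    consider "b = b1" "w \<noteq> w1" | "b = b2" "w \<noteq> w2" using Z by blast
    then show ?thesis
    proof cases
      case 1
      have "nbw E [a, w1, b1, w, z, fst (F w z), snd (F w z)]"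
        using 1 Z w1 b1 w1s by simp
      then show ?thesis using nc[of a w1 "[b1, w, z]" "fst (F w z)" s x] z(2) by simp
    next
      case 2
      have "nbw E [a, w2, b2, w, z, fst (F w z), snd (F w z)]"
        using 2 Z w2 b2 w2s by simp
      then show ?thesis using nc[of a w2 "[b2, w, z]" "fst (F w z)" s x] z(2) by simp
    qed
  qed
  have TTd: "\<not> (E (snd (F w z)) x \<and> E (snd (F w' y)) x)" if "zp b1 w z" "zp b2 w' y"
    for w z w' y x
  proof -
    note Z = zpD[OF that(1)] and Y = zpD[OF that(2)]
    have ww: "w \<noteq> w1" "w' \<noteq> w2" "w2 \<noteq> w'" using Z Y b12 by auto
    have "nbw E [snd (F w z), fst (F w z), z, w, b1, w1, a, w2, b2, w', y, fst (F w' y), snd (F w' y)]"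
      using Z Y ww w1 w2 b1 b2 w1s w2s by simp
    then show ?thesis using nc[of "snd (F w z)" "fst (F w z)" "[z, w, b1, w1, a, w2, b2, w', y]" "fst (F w' y)" "snd (F w' y)" x] by simp
  qed
  have TT: "\<not> (E s x \<and> E s' x)" if hT: "s \<in> T" "s' \<in> T" "s \<noteq> s'" for s s' x
  proof -
    obtain b w z where z: "zp b w z" "s = snd (F w z)" using hT T_def by blast
    obtain b' w' y where y: "zp b' w' y" "s' = snd (F w' y)" using hT T_def by blast
    note Z = zpD[OF z(1)] and Y = zpD[OF y(1)]
    show ?thesis
    proof (cases "b = b'")
      case True
      show ?thesis
      proof (cases "w = w'")
        case True
        then have "z \<noteq> y" "y \<noteq> z" using z y hT(3) by auto
        then have "nbw E [snd (F w z), fst (F w z), z, w, y, fst (F w y), snd (F w y)]"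
          using Z Y True by simp
        then show ?thesis using nc[of s "fst (F w z)" "[z, w, y]" "fst (F w' y)" s' x] z(2) y(2) True by simp
      next
        case False
        then have "w \<noteq> w'" "w' \<noteq> w" by auto
        moreover have "b \<noteq> y" "E b w'" using Y \<open>b = b'\<close> by auto
        ultimately have "nbw E [snd (F w z), fst (F w z), z, w, b, w', y, fst (F w' y), snd (F w' y)]"
          using Z Y by simp
        then show ?thesis using nc[of s "fst (F w z)" "[z, w, b, w', y]" "fst (F w' y)" s' x] z(2) y(2) by simp
      qed
    next
      case False
      then consider "zp b1 w z" "zp b2 w' y" | "zp b2 w z" "zp b1 w' y"
        using z(1) y(1) unfolding zp_def by blast
      then show ?thesis
      proof cases
        case 1 then show ?thesis using TTd[of w z w' y x] z(2) y(2) by blast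
      next
        case 2 then show ?thesis using TTd[of w' y w z x] z(2) y(2) by blast
      qed
    qed
  qed
  have TV: "T \<subseteq> V"
  proof
    fix s assume "s \<in> T"
    then obtain b w z where z: "zp b w z" "s = snd (F w z)" using T_def by blast
    then show "s \<in> V" using Fp[of w z] EV zp_def by blast
  qed
  have Spack: "open_packing V E S"
    unfolding open_packing_def
  proof (intro conjI ballI impI)
    show "S \<subseteq> V" using a TV S_def by auto
  next
    fix u v assume uv: "u \<in> S" "v \<in> S" "u \<noteq> v"
    show "\<not> (\<exists>w\<in>V. E u w \<and> E v w)"
    proof
      assume "\<exists>w\<in>V. E u w \<and> E v w"
      then obtain w where w: "E u w" "E v w" by blast
      consider "u = a" "v \<in> T" | "v = a" "u \<in> T" | "u \<in> T" "v \<in> T"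
        using uv S_def by blast
      then show False
      proof cases
        case 1 then show False using aT[of v w] w by blast
      next
        case 2 then show False using aT[of u w] w by blast
      next
        case 3 then show False using TT[of u v w] w uv(3) by blast
      qed
    qed
  qed
  obtain P where P: "open_packing V E P" "S \<subseteq> P"
    and Pmax: "\<And>Q. open_packing V E Q \<and> S \<subseteq> Q \<Longrightarrow> card Q \<le> card P"
  proof -
    have "\<exists>x. (open_packing V E x \<and> S \<subseteq> x) \<and> (\<forall>y. open_packing V E y \<and> S \<subseteq> y \<longrightarrow> card y \<le> card x)"
    proof (rule Lattices_Big.ex_has_greatest_nat[where b = "Suc (card V)"])
      show "open_packing V E S \<and> S \<subseteq> S" using Spack by simp
      show "\<forall>y. open_packing V E y \<and> S \<subseteq> y \<longrightarrow> card y < Suc (card V)"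
        using fin by (auto simp: open_packing_def less_Suc_eq_le intro: card_mono)
    qed
    then show ?thesis using that by blast
  qed
  have Pfin: "finite P" using P(1) fin by (auto simp: open_packing_def intro: finite_subset)
  have Pmaxl: "maximal_open_packing V E P"
    unfolding maximal_open_packing_def
  proof (intro conjI allI impI)
    show "open_packing V E P" by (rule P(1))
    fix Q assume Q: "open_packing V E Q \<and> P \<subseteq> Q"
    then have "card Q \<le> card P" using Pmax P(2) by blast
    moreover have "finite Q" using Q fin by (auto simp: open_packing_def intro: finite_subset)
    ultimately show "Q = P" using Q card_subset_eq by (metis antisym card_mono)
  qed
  have aP: "a \<in> P" using P(2) S_def by auto
  have TP: "T \<subseteq> P" using P(2) S_def by auto
  have b1P: "b1 \<notin> P"
  proof
    assume "b1 \<in> P"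
    from packing_conflict[OF P(1) aP this] b1(2) EV[OF w1] w1 sy[OF b1(1)] show False by blast
  qed
  have b2P: "b2 \<notin> P"
  proof
    assume "b2 \<in> P"
    from packing_conflict[OF P(1) aP this] b2(2) EV[OF w2(1)] w2(1) sy[OF b2(1)] show False by blast
  qed
  have key: "False" if hk: "u \<in> P" "u \<noteq> a" "b = b1 \<and> wb = w1 \<or> b = b2 \<and> wb = w2" "E b x" "E u x" for u b wb x
  proof (cases "x = wb")
    case True
    then have "E a x" using hk(3) w1 w2 by auto
    moreover have "x \<in> V" using EV[OF hk(4)] by simp
    ultimately show False
      using packing_conflict[OF P(1) aP hk(1)] hk(2) hk(5) by blast
  next
    case False
    have ub: "u \<noteq> b" using hk(1,3) b1P b2P by auto
    have xu: "E x u" using sy[OF hk(5)] .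
    have "zp b x u" unfolding zp_def using hk(3,4) False ub xu by blast
    then have sT: "snd (F x u) \<in> T" unfolding T_def by blast
    have Fu: "E u (fst (F x u))" "E (fst (F x u)) (snd (F x u))" "snd (F x u) \<noteq> u"
      using Fp[OF xu] by auto
    have sP: "snd (F x u) \<in> P" using sT TP by blast
    have fV: "fst (F x u) \<in> V" using EV[OF Fu(1)] by simp
    show False
      using packing_conflict[OF P(1) hk(1) sP _ fV Fu(1) sy[OF Fu(2)]] Fu(3) by metis
  qed
  define Q where "Q = insert b1 (insert b2 (P - {a}))"
  have cardQ: "card Q = card P + 1"
  proof -
    have "card (P - {a}) = card P - 1" using aP Pfin by simp
    moreover have "card P \<ge> 1" using aP Pfin by (auto simp: Suc_le_eq card_gt_0_iff)
    ultimately show ?thesis unfolding Q_def using b1P b2P b12 Pfin by simp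
  qed
  have b1V: "b1 \<in> V" and b2V: "b2 \<in> V" using b1 b2 EV by auto
  have Qpack: "open_packing V E Q"
    unfolding open_packing_def
  proof (intro conjI ballI impI)
    show "Q \<subseteq> V" using P(1) b1V b2V unfolding Q_def open_packing_def by auto
  next
    fix u v assume uv: "u \<in> Q" "v \<in> Q" "u \<noteq> v"
    show "\<not> (\<exists>w\<in>V. E u w \<and> E v w)"
    proof
      assume "\<exists>w\<in>V. E u w \<and> E v w"
      then obtain w where w: "w \<in> V" "E u w" "E v w" by blast
      show False
      proof (cases "u \<in> {b1, b2}")
        case True
        show False
        proof (cases "v \<in> {b1, b2}")
          case True
          then show False using \<open>u \<in> {b1, b2}\<close> uv(3) b12c w by auto
        next
          case False
          then have "v \<in> P" "v \<noteq> a" using uv(2) Q_def by auto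
          then show False using key[of v u _ w] True w by blast
        qed
      next
        case False
        then have uP: "u \<in> P" "u \<noteq> a" using uv(1) Q_def by auto
        show False
        proof (cases "v \<in> {b1, b2}")
          case True
          then show False using key[of u v _ w] uP w by blast
        next
          case False
          then have "v \<in> P" using uv(2) Q_def by auto
          then show False using packing_conflict[OF P(1) uP(1) _ uv(3) w] by blast
        qed
      qed
    qed
  qed
  have finpow: "finite {P. open_packing V E P}"
    by (rule finite_subset[of _ "Pow V"]) (auto simp: open_packing_def fin)
  have finmax: "finite {P. maximal_open_packing V E P}"
    by (rule finite_subset[OF _ finpow]) (auto simp: maximal_open_packing_def)
  have "lower_open_packing_number V E \<le> card P"
    unfolding lower_open_packing_number_def using finmax Pmaxl by (intro Min_le) auto
  moreover have "card Q \<le> open_packing_number V E"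
    unfolding open_packing_number_def using finpow Qpack by (intro Max_ge) auto
  ultimately show ?thesis unfolding in_class_U_def using cardQ by simp
qed

end
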